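(* In the setting of the OMD iteration $\pi^{(1)}=\pi^{\mathrm{ref}}$, $\pi^{(t+1)}(a)\propto(\pi^{\mathrm{ref}}(a))^{1/t}(\pi^{(t)}(a))^{(t-1)/t}\exp(\frac\eta tQ^{(t)}(a))$, with $Q^{(t)}\in[0,1]^{\mathcal A}$ and $f^{(t)}(\pi)=\langle\pi,Q^{(t)}\rangle-\eta^{-1}\mathrm{KL}(\pi\|\pi^{\mathrm{ref}})$, the following hold for all $t\ge1$: (i) $\pi^{(t+1)}(a)\propto\pi^{\mathrm{ref}}(a)\exp\big(\frac\eta t\sum_{k=1}^tQ^{(k)}(a)\big)$, and $\pi^{(t+1)}=\arg\max_{\pi\in\Delta(\mathcal A)}\sum_{k=1}^tf^{(k)}(\pi)$; (ii) $\|\pi^{(t+1)}-\pi^{(t)}\|_1\le\frac{2\eta}{2t-1}$ and $f^{(t)}(\pi^{(t+1)})-f^{(t)}(\pi^{(t)})\le\frac{2\eta}{2t-1}$; (iii) for every $T\ge1$ and every $\pi^*\in\Delta(\mathcal A)$, $\sum_{t=1}^T\big(f^{(t)}(\pi^* )-f^{(t)}(\pi^{(t)})\big)\le2\eta(1+\log T)$.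
   Context: $\mathcal A$ finite, $\pi^{\mathrm{ref}}\in\Delta(\mathcal A)$ with full support, $\eta>0$; $\mathrm{KL}(p\|q)=\sum_ap(a)\log(p(a)/q(a))$; $\|\cdot\|_1$ is the $\ell_1$ norm on $\mathbb R^{\mathcal A}$. *)

theory Defs
  imports Complex_Main
begin

definition simplex :: "('a::finite \<Rightarrow> real) set" where
  "simplex = {p. (\<forall>a. 0 \<le> p a) \<and> (\<Sum>a\<in>UNIV. p a) = 1}"

text \<open>KL divergence (with the convention 0 log 0 = 0, since 0 * _ = 0).\<close>
definition KL :: "('a::finite \<Rightarrow> real) \<Rightarrow> ('a \<Rightarrow> real) \<Rightarrow> real" where
  "KL p q = (\<Sum>a\<in>UNIV. p a * ln (p a / q a))"

definition fobj :: "real \<Rightarrow> ('a::finite \<Rightarrow> real) \<Rightarrow> (nat \<Rightarrow> 'a \<Rightarrow> real) \<Rightarrow> nat \<Rightarrow> ('a \<Rightarrow> real) \<Rightarrow> real" where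
  "fobj \<eta> pref Q t p = (\<Sum>a\<in>UNIV. p a * Q t a) - KL p pref / \<eta>"

definition omd_weight :: "real \<Rightarrow> ('a::finite \<Rightarrow> real) \<Rightarrow> (nat \<Rightarrow> 'a \<Rightarrow> real) \<Rightarrow> nat \<Rightarrow> ('a \<Rightarrow> real) \<Rightarrow> 'a \<Rightarrow> real" where
  "omd_weight \<eta> pref Q t p a =
     pref a powr (1 / real t) * p a powr ((real t - 1) / real t) * exp (\<eta> / real t * Q t a)"

end

theory Submission
  imports Defs
begin


lemma gibbs:
  fixes p q :: "'a::finite \<Rightarrow> real"
  assumes p: "p \<in> simplex" and q: "\<forall>a. 0 < q a" "(\<Sum>a\<in>UNIV. q a) = 1"
  shows "0 \<le> KL p q"
proof -
  have pt: "p a - q a \<le> p a * ln (p a / q a)" for a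
  proof (cases "p a = 0")
    case True thus ?thesis using q(1)[rule_format, of a] by simp
  next
    case False
    then have pa: "p a > 0" using p unfolding simplex_def by (auto simp: less_le)
    have qa: "q a > 0" using q by simp
    have "ln (q a / p a) \<le> q a / p a - 1" by (rule ln_le_minus_one) (simp add: pa qa)
    moreover have "ln (q a / p a) = - ln (p a / q a)" using pa qa by (simp add: ln_div)
    ultimately have "1 - q a / p a \<le> ln (p a / q a)" by simp
    then have "p a * (1 - q a / p a) \<le> p a * ln (p a / q a)" using pa by (simp add: mult_left_mono)
    thus ?thesis using pa by (simp add: algebra_simps)
  qed
  have "0 = (\<Sum>a\<in>UNIV. p a) - (\<Sum>a\<in>UNIV. q a)" using p q by (simp add: simplex_def)
  also have "\<dots> = (\<Sum>a\<in>UNIV. p a - q a)" by (simp add: sum_subtractf)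
  also have "\<dots> \<le> (\<Sum>a\<in>UNIV. p a * ln (p a / q a))" by (rule sum_mono) (rule pt)
  finally show ?thesis by (simp add: KL_def)
qed

lemma KL_self: "KL p p = 0"
  unfolding KL_def by (rule sum.neutral) simp

lemma decomp:
  fixes p r w :: "'a::finite \<Rightarrow> real"
  assumes p: "p \<in> simplex" and r: "\<forall>a. 0 < r a"
  shows "KL p r = KL p (\<lambda>a. r a * exp (w a) / (\<Sum>b\<in>UNIV. r b * exp (w b)))
           + (\<Sum>a\<in>UNIV. p a * w a) - ln (\<Sum>b\<in>UNIV. r b * exp (w b))"
proof -
  define Z where "Z = (\<Sum>b\<in>UNIV. r b * exp (w b))"
  have Z: "Z > 0" unfolding Z_def using r by (intro sum_pos) auto
  have pt: "p a * ln (p a / r a) = p a * ln (p a / (r a * exp (w a) / Z)) + (p a * w a - p a * ln Z)" for a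
  proof (cases "p a = 0")
    case True then show ?thesis by simp
  next
    case False
    then have pa: "p a > 0" using p by (auto simp: simplex_def less_le)
    have ra: "r a > 0" using r by simp
    have e: "p a / (r a * exp (w a) / Z) = (p a * Z) / (r a * exp (w a))" by simp
    have l1: "ln (p a / (r a * exp (w a) / Z)) = ln (p a) + ln Z - (ln (r a) + w a)"
      unfolding e using pa ra Z by (simp add: ln_div ln_mult)
    have l2: "ln (p a / r a) = ln (p a) - ln (r a)" using pa ra by (simp add: ln_div)
    have X: "ln (p a / (r a * exp (w a) / Z)) = ln (p a / r a) - w a + ln Z" using l1 l2 by linarith
    show ?thesis by (subst X) (simp add: algebra_simps)
  qed
  have "KL p r = (\<Sum>a\<in>UNIV. p a * ln (p a / (r a * exp (w a) / Z))) + ((\<Sum>a\<in>UNIV. p a * w a) - (\<Sum>a\<in>UNIV. p a) * ln Z)"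
    unfolding KL_def by (simp add: pt sum.distrib sum_subtractf sum_distrib_right)
  then show ?thesis using p by (simp add: KL_def simplex_def Z_def)
qed

lemma tanh_ineq:
  fixes u :: real
  assumes "0 \<le> u"
  shows "2 * (exp u - 1) \<le> u * (exp u + 1)"
proof -
  let ?f = "\<lambda>u::real. u * (exp u + 1) - 2 * (exp u - 1)"
  have "?f 0 \<le> ?f u"
  proof (rule DERIV_nonneg_imp_nondecreasing[OF assms])
    fix x assume "0 \<le> x" "x \<le> u"
    have d: "(?f has_real_derivative ((exp x + 1) + x * exp x - 2 * exp x)) (at x)"
      by (auto intro!: derivative_eq_intros)
    have "1 - x \<le> exp (-x)" using exp_ge_add_one_self[of "-x"] by simp
    hence "(1 - x) * exp x \<le> exp (-x) * exp x" by (rule mult_right_mono) simp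
    hence "(1 - x) * exp x \<le> 1" using exp_minus_inverse[of x] by (simp add: mult.commute)
    hence "0 \<le> (exp x + 1) + x * exp x - 2 * exp x" by (simp add: algebra_simps)
    thus "\<exists>y. DERIV ?f x :> y \<and> 0 \<le> y" using d by blast
  qed
  thus ?thesis by simp
qed

lemma l1_bound:
  fixes p h :: "'a::finite \<Rightarrow> real"
  assumes p: "p \<in> simplex" and h: "\<forall>a. m \<le> h a \<and> h a \<le> m + \<delta>" and \<delta>: "0 < \<delta>"
  shows "(\<Sum>a\<in>UNIV. \<bar>p a * exp (h a) / (\<Sum>b\<in>UNIV. p b * exp (h b)) - p a\<bar>) \<le> \<delta> / 2"
proof -
  define \<mu> where "\<mu> = (\<Sum>b\<in>UNIV. p b * exp (h b))"
  define A where "A = exp m"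
  define B where "B = exp (m + \<delta>)"
  define s where "s = exp (\<delta>/2)"
  have A0: "A > 0" by (simp add: A_def)
  have s1: "s > 1" using \<delta> by (simp add: s_def)
  have B: "B = A * s^2"
    by (simp add: A_def B_def s_def power2_eq_square exp_add[symmetric])
  have X: "A \<le> exp (h a) \<and> exp (h a) \<le> B" for a using h by (simp add: A_def B_def)
  have psum: "(\<Sum>a\<in>UNIV. p a) = 1" and pnn: "\<And>a. p a \<ge> 0" using p by (auto simp: simplex_def)
  have "A = (\<Sum>a\<in>UNIV. p a * A)" using psum by (simp add: sum_distrib_right[symmetric])
  also have "\<dots> \<le> \<mu>" unfolding \<mu>_def by (rule sum_mono) (intro mult_left_mono; simp add: X pnn)
  finally have \<mu>A: "A \<le> \<mu>" .
  have "\<mu> \<le> (\<Sum>a\<in>UNIV. p a * B)" unfolding \<mu>_def by (rule sum_mono) (intro mult_left_mono; simp add: X pnn)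
  also have "\<dots> = B" using psum by (simp add: sum_distrib_right[symmetric])
  finally have \<mu>B: "\<mu> \<le> B" .
  have \<mu>0: "\<mu> > 0" using A0 \<mu>A by simp
  have pt: "(B - A) * \<bar>exp (h a) - \<mu>\<bar> \<le> (B - exp (h a)) * (\<mu> - A) + (exp (h a) - A) * (B - \<mu>)" for a
  proof -
    define x where "x = exp (h a)"
    have xA: "A \<le> x" and xB: "x \<le> B" using X[of a] by (auto simp: x_def)
    have "(B - A) * \<bar>x - \<mu>\<bar> \<le> (B - x) * (\<mu> - A) + (x - A) * (B - \<mu>)"
    proof (cases "\<mu> \<le> x")
      case True
      have "(B - x) * (\<mu> - A) + (x - A) * (B - \<mu>) - (B - A) * (x - \<mu>) = 2 * ((B - x) * (\<mu> - A))"
        by (simp add: algebra_simps)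
      moreover have "0 \<le> (B - x) * (\<mu> - A)" using xB \<mu>A by simp
      moreover have ab: "\<bar>x - \<mu>\<bar> = x - \<mu>" using True by simp
      ultimately show ?thesis unfolding ab by linarith
    next
      case False
      have "(B - x) * (\<mu> - A) + (x - A) * (B - \<mu>) - (B - A) * (\<mu> - x) = 2 * ((x - A) * (B - \<mu>))"
        by (simp add: algebra_simps)
      moreover have "0 \<le> (x - A) * (B - \<mu>)" using xA \<mu>B by simp
      moreover have ab: "\<bar>x - \<mu>\<bar> = \<mu> - x" using False by simp
      ultimately show ?thesis unfolding ab by linarith
    qed
    thus ?thesis by (simp add: x_def)
  qed
  define L where "L = (\<Sum>a\<in>UNIV. p a * \<bar>exp (h a) - \<mu>\<bar>)"
  have "(B - A) * L = (\<Sum>a\<in>UNIV. p a * ((B - A) * \<bar>exp (h a) - \<mu>\<bar>))"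
    unfolding L_def by (simp add: sum_distrib_left algebra_simps)
  also have "\<dots> \<le> (\<Sum>a\<in>UNIV. p a * ((B - exp (h a)) * (\<mu> - A) + (exp (h a) - A) * (B - \<mu>)))"
    by (rule sum_mono) (rule mult_left_mono[OF pt pnn])
  also have "\<dots> = (\<Sum>a\<in>UNIV. p a * exp (h a) * ((B - \<mu>) - (\<mu> - A)) + p a * (B * (\<mu> - A) - A * (B - \<mu>)))"
    by (rule sum.cong) (simp_all add: algebra_simps)
  also have "\<dots> = \<mu> * ((B - \<mu>) - (\<mu> - A)) + (B * (\<mu> - A) - A * (B - \<mu>))"
    by (simp add: sum.distrib sum_distrib_right[symmetric] psum \<mu>_def)
  also have "\<dots> = 2 * (\<mu> - A) * (B - \<mu>)" by (simp add: algebra_simps)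
  finally have L1: "(B - A) * L \<le> 2 * (\<mu> - A) * (B - \<mu>)" .
  have sq: "0 \<le> (\<mu> - A * s)^2" by simp
  have "(\<mu> - A) * (B - \<mu>) \<le> \<mu> * A * (s - 1)^2"
    using sq unfolding B by (simp add: power2_eq_square algebra_simps)
  with L1 have "A * ((s - 1) * ((s + 1) * L)) \<le> A * ((s - 1) * (2 * \<mu> * (s - 1)))"
    unfolding B by (simp add: power2_eq_square algebra_simps)
  hence "(s - 1) * ((s + 1) * L) \<le> (s - 1) * (2 * \<mu> * (s - 1))" using A0 by simp
  hence L2: "(s + 1) * L \<le> 2 * \<mu> * (s - 1)" using s1 by simp
  have "2 * (s - 1) \<le> \<delta> / 2 * (s + 1)" using tanh_ineq[of "\<delta>/2"] \<delta> by (simp add: s_def)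
  hence "2 * \<mu> * (s - 1) \<le> \<mu> * (\<delta> / 2) * (s + 1)" using \<mu>0
    by (metis (no_types, lifting) mult.assoc mult.left_commute mult_le_cancel_left_pos)
  with L2 have "(s + 1) * L \<le> (s + 1) * (\<mu> * (\<delta> / 2))" by (simp add: algebra_simps)
  hence L3: "L \<le> \<mu> * (\<delta> / 2)" using s1 by simp
  have "(\<Sum>a\<in>UNIV. \<bar>p a * exp (h a) / \<mu> - p a\<bar>) = L / \<mu>"
    unfolding L_def sum_divide_distrib
  proof (rule sum.cong)
    fix a
    have "p a * exp (h a) / \<mu> - p a = p a * (exp (h a) - \<mu>) / \<mu>" using \<mu>0 by (simp add: field_simps)
    thus "\<bar>p a * exp (h a) / \<mu> - p a\<bar> = p a * \<bar>exp (h a) - \<mu>\<bar> / \<mu>"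
      using \<mu>0 pnn[of a] by (simp add: abs_mult)
  qed simp
  also have "\<dots> \<le> \<delta> / 2" using L3 \<mu>0 by (simp add: divide_le_eq mult.commute)
  finally show ?thesis unfolding \<mu>_def .
qed

lemma inner_bound:
  fixes d g :: "'a::finite \<Rightarrow> real"
  assumes d: "(\<Sum>a\<in>UNIV. d a) = 0" and g: "\<forall>a. m \<le> g a \<and> g a \<le> m + r"
  shows "(\<Sum>a\<in>UNIV. d a * g a) \<le> r / 2 * (\<Sum>a\<in>UNIV. \<bar>d a\<bar>)"
proof -
  have "(\<Sum>a\<in>UNIV. d a * (g a - (m + r/2))) = (\<Sum>a\<in>UNIV. d a * g a) - (m + r/2) * (\<Sum>a\<in>UNIV. d a)"
    by (simp add: algebra_simps sum_subtractf sum_distrib_left sum.distrib)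
  hence "(\<Sum>a\<in>UNIV. d a * g a) = (\<Sum>a\<in>UNIV. d a * (g a - (m + r/2)))" using d by simp
  also have "\<dots> \<le> (\<Sum>a\<in>UNIV. \<bar>d a\<bar> * (r/2))"
  proof (rule sum_mono)
    fix a
    have "m \<le> g a" "g a \<le> m + r" using g by auto
    hence "\<bar>g a - (m + r/2)\<bar> \<le> r/2" unfolding abs_le_iff by linarith
    hence "\<bar>d a\<bar> * \<bar>g a - (m + r/2)\<bar> \<le> \<bar>d a\<bar> * (r/2)" by (rule mult_left_mono) simp
    thus "d a * (g a - (m + r/2)) \<le> \<bar>d a\<bar> * (r/2)"
      by (metis abs_ge_self abs_mult order_trans)
  qed
  also have "\<dots> = (\<Sum>a\<in>UNIV. \<bar>d a\<bar>) * (r/2)" by (rule sum_distrib_right[symmetric])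
  finally show ?thesis by (metis mult.commute)
qed

lemma fobj_sum:
  "(\<Sum>k\<in>K. fobj \<eta> r Q k p) = (\<Sum>a\<in>UNIV. p a * (\<Sum>k\<in>K. Q k a)) - real (card K) * KL p r / \<eta>"
  unfolding fobj_def by (simp add: sum_subtractf sum_distrib_left sum.swap[of _ K UNIV])

lemma normalize_scale:
  fixes x y :: "'a::finite \<Rightarrow> real"
  assumes "\<forall>a. x a = C * y a" "C \<noteq> 0"
  shows "x a / (\<Sum>b\<in>UNIV. x b) = y a / (\<Sum>b\<in>UNIV. y b)"
  using assms by (simp add: sum_distrib_left[symmetric])

lemma harm_bound:
  assumes "T \<ge> 1"
  shows "(\<Sum>t=1..T. 1 / (2 * real t - 1)) \<le> 1 + ln (real T)"
  using assms
proof (induction T rule: nat_induct_at_least)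
  case base then show ?case by simp
next
  case (Suc n)
  have n: "real n > 0" using Suc by simp
  have "ln (real n / real (Suc n)) \<le> real n / real (Suc n) - 1" by (rule ln_le_minus_one) (use n in \<open>simp add: divide_pos_pos\<close>)
  also have "\<dots> = - 1 / real (Suc n)" by (simp add: field_simps)
  finally have "1 / real (Suc n) \<le> ln (real (Suc n)) - ln (real n)" using n by (simp add: ln_div)
  moreover have "1 / (2 * real (Suc n) - 1) \<le> 1 / real (Suc n)"
    by (rule divide_left_mono) (auto simp: n)
  ultimately show ?case using Suc by simp
qed



theorem mainTheorem9:
  fixes \<pi>ref :: "'a::finite \<Rightarrow> real" and \<eta> :: real
    and Q :: "nat \<Rightarrow> 'a \<Rightarrow> real" and \<pi> :: "nat \<Rightarrow> 'a \<Rightarrow> real"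
  assumes ref_simplex: "\<pi>ref \<in> simplex"
    and ref_pos: "\<forall>a. 0 < \<pi>ref a"
    and eta_pos: "0 < \<eta>"
    and Q_range: "\<forall>t\<ge>1. \<forall>a. 0 \<le> Q t a \<and> Q t a \<le> 1"
    and init: "\<pi> 1 = \<pi>ref"
    and step: "\<forall>t\<ge>1. \<forall>a. \<pi> (t + 1) a =
                  omd_weight \<eta> \<pi>ref Q t (\<pi> t) a / (\<Sum>b\<in>UNIV. omd_weight \<eta> \<pi>ref Q t (\<pi> t) b)"
  shows "(\<forall>t\<ge>1.
            (\<exists>c>0. \<forall>a. \<pi> (t + 1) a = c * \<pi>ref a * exp (\<eta> / real t * (\<Sum>k=1..t. Q k a)))
          \<and> is_arg_max (\<lambda>p. \<Sum>k=1..t. fobj \<eta> \<pi>ref Q k p) (\<lambda>p. p \<in> simplex) (\<pi> (t + 1))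
          \<and> (\<Sum>a\<in>UNIV. \<bar>\<pi> (t + 1) a - \<pi> t a\<bar>) \<le> 2 * \<eta> / (2 * real t - 1)
          \<and> fobj \<eta> \<pi>ref Q t (\<pi> (t + 1)) - fobj \<eta> \<pi>ref Q t (\<pi> t) \<le> 2 * \<eta> / (2 * real t - 1))
       \<and> (\<forall>T\<ge>1. \<forall>p\<in>simplex.
            (\<Sum>t=1..T. fobj \<eta> \<pi>ref Q t p - fobj \<eta> \<pi>ref Q t (\<pi> t)) \<le> 2 * \<eta> * (1 + ln (real T)))"
proof -
  define S where "S k a = (\<Sum>j=1..k. Q j a)" for k a
  define Av where "Av k a = S k a / real k" for k a
  define G where "G k a = \<pi>ref a * exp (\<eta> * Av k a)" for k a
  define Z where "Z k = (\<Sum>b\<in>UNIV. G k b)" for k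
  have refS: "(\<Sum>a\<in>UNIV. \<pi>ref a) = 1" using ref_simplex by (simp add: simplex_def)
  have Gpos: "G k a > 0" for k a using ref_pos by (simp add: G_def)
  have Zpos: "Z k > 0" for k unfolding Z_def by (intro sum_pos) (auto simp: Gpos)
  have S_Suc: "S (Suc n) a = S n a + Q (Suc n) a" for n a by (simp add: S_def)
  have S_range: "0 \<le> S n a \<and> S n a \<le> real n" for n a
  proof -
    have "0 \<le> S n a" unfolding S_def using Q_range by (intro sum_nonneg) auto
    moreover have "S n a \<le> (\<Sum>j=1..n. (1::real))" unfolding S_def using Q_range by (intro sum_mono) auto
    ultimately show ?thesis by simp
  qed
  have Av_range: "0 \<le> Av n a \<and> Av n a \<le> 1" for n a
    using S_range[of n a] by (cases "n = 0") (auto simp: Av_def divide_le_eq)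
  have nAv: "real n * Av n a = S n a" for n a
    using S_range[of n a] by (cases "n = 0") (auto simp: Av_def)
  have Av_step: "Av (Suc n) a - Av n a = (Q (Suc n) a - Av n a) / real (Suc n)" for n a
  proof -
    have "Av (Suc n) a = (S n a + Q (Suc n) a) / real (Suc n)"
      by (simp add: Av_def S_Suc)
    also have "\<dots> = (real n * Av n a + Q (Suc n) a) / real (Suc n)" by (simp only: nAv)
    finally have "Av (Suc n) a = (real n * Av n a + Q (Suc n) a) / real (Suc n)" .
    thus ?thesis by (simp add: field_simps)
  qed
  have G0: "G 0 a = \<pi>ref a" for a by (simp add: G_def Av_def)
  have Z0: "Z 0 = 1" by (simp add: Z_def G0 refS)
  have closed: "\<pi> (Suc n) a = G n a / Z n" for n a
  proof (induction n arbitrary: a)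
    case 0 show ?case using init by (simp add: G0 Z0)
  next
    case (Suc n)
    define t where "t = Suc n"
    have sa: "\<pi> (Suc (Suc n)) a = omd_weight \<eta> \<pi>ref Q t (\<pi> t) a / (\<Sum>b\<in>UNIV. omd_weight \<eta> \<pi>ref Q t (\<pi> t) b)" for a
      using step[rule_format, of t a] by (simp add: t_def)
    have ow: "omd_weight \<eta> \<pi>ref Q t (\<pi> t) b = Z n powr (- (real n / real t)) * G t b" for b
    proof -
      have rt: "real t - 1 = real n" by (simp add: t_def)
      have p1: "\<pi>ref b powr (1 / real t) * \<pi>ref b powr (real n / real t) = \<pi>ref b"
      proof -
        have "\<pi>ref b powr (1 / real t) * \<pi>ref b powr (real n / real t) = \<pi>ref b powr (1/real t + real n / real t)"
          by (simp add: powr_add)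
        also have "1/real t + real n / real t = 1" by (simp add: t_def field_simps)
        finally show ?thesis using ref_pos[rule_format, of b] by simp
      qed
      have p2: "\<eta> * Av n b * (real n / real t) + \<eta> / real t * Q t b = \<eta> * Av t b"
      proof -
        have tA: "real n * Av n b + Q t b = real t * Av t b"
          using nAv[of t b] nAv[of n b] S_Suc[of n b] by (simp add: t_def)
        have "\<eta> * Av n b * (real n / real t) + \<eta> / real t * Q t b = \<eta> * (real n * Av n b + Q t b) / real t"
        proof -
          have t0: "real t > 0" by (simp add: t_def)
          show ?thesis using t0 by (simp add: field_simps)
        qed
        also have "\<dots> = \<eta> * Av t b" unfolding tA by (simp add: t_def)
        finally show ?thesis .
      qed
      have "omd_weight \<eta> \<pi>ref Q t (\<pi> t) b
          = (\<pi>ref b powr (1 / real t) * \<pi>ref b powr (real n / real t))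
            * (exp (\<eta> * Av n b * (real n / real t)) * exp (\<eta> / real t * Q t b)) / Z n powr (real n / real t)"
        unfolding omd_weight_def rt t_def Suc.IH
        by (simp add: G_def powr_divide powr_mult exp_powr_real t_def)
      also have "\<dots> = \<pi>ref b * exp (\<eta> * Av t b) / Z n powr (real n / real t)"
        unfolding p1 exp_add[symmetric] p2 ..
      also have "\<dots> = Z n powr (- (real n / real t)) * G t b"
        by (simp add: G_def powr_minus divide_inverse)
      finally show ?thesis .
    qed
    have "\<pi> (Suc (Suc n)) a = G t a / (\<Sum>b\<in>UNIV. G t b)"
    proof -
      have C: "Z n powr (- (real n / real t)) \<noteq> 0" using Zpos[of n] by simp
      show ?thesis unfolding sa by (rule normalize_scale[OF _ C]) (simp add: ow)
    qed
    thus ?case by (simp add: Z_def t_def)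
  qed
  have pi_fun: "\<pi> (Suc n) = (\<lambda>a. \<pi>ref a * exp (\<eta> * Av n a) / (\<Sum>b\<in>UNIV. \<pi>ref b * exp (\<eta> * Av n b)))" for n
    by (rule ext) (simp add: closed G_def Z_def)
  have pi_pos: "\<pi> (Suc n) a > 0" for n a using Gpos Zpos by (simp add: closed)
  have pi_sum: "(\<Sum>a\<in>UNIV. \<pi> (Suc n) a) = 1" for n
    using Zpos[of n] by (simp add: closed sum_divide_distrib[symmetric] Z_def[symmetric])
  have pi_simp: "\<pi> (Suc n) \<in> simplex" for n
    using pi_pos[of n] pi_sum[of n] by (auto simp: simplex_def less_imp_le)
  have Fform: "(\<Sum>k=1..Suc n. fobj \<eta> \<pi>ref Q k p) = real (Suc n) / \<eta> * (ln (Z (Suc n)) - KL p (\<pi> (Suc (Suc n))))"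
    if p: "p \<in> simplex" for n p
  proof -
    define t where "t = Suc n"
    have dc: "KL p \<pi>ref = KL p (\<pi> (Suc t)) + (\<Sum>a\<in>UNIV. p a * (\<eta> * Av t a)) - ln (Z t)"
      using decomp[OF p ref_pos, of "\<lambda>a. \<eta> * Av t a"] unfolding pi_fun Z_def G_def .
    have "(\<Sum>k=1..t. fobj \<eta> \<pi>ref Q k p) = (\<Sum>a\<in>UNIV. p a * S t a) - real t * KL p \<pi>ref / \<eta>"
      using fobj_sum[where K="{1..t}" and \<eta>=\<eta> and r=\<pi>ref and Q=Q and p=p] by (simp add: S_def)
    also have "(\<Sum>a\<in>UNIV. p a * S t a) = real t * (\<Sum>a\<in>UNIV. p a * Av t a)"
      by (simp add: nAv[symmetric] sum_distrib_left algebra_simps)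
    also have "(\<Sum>a\<in>UNIV. p a * (\<eta> * Av t a)) = \<eta> * (\<Sum>a\<in>UNIV. p a * Av t a)"
      by (simp add: sum_distrib_left algebra_simps)
    hence "KL p \<pi>ref = KL p (\<pi> (Suc t)) + \<eta> * (\<Sum>a\<in>UNIV. p a * Av t a) - ln (Z t)" using dc by simp
    finally show ?thesis using eta_pos unfolding t_def[symmetric] by (simp add: field_simps)
  qed
  have argmax_le: "(\<Sum>k=1..Suc n. fobj \<eta> \<pi>ref Q k x) \<le> (\<Sum>k=1..Suc n. fobj \<eta> \<pi>ref Q k (\<pi> (Suc (Suc n))))"
    if x: "x \<in> simplex" for n x
  proof -
    have "0 \<le> KL x (\<pi> (Suc (Suc n)))" by (rule gibbs[OF x]) (use pi_pos pi_sum in auto)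
    thus ?thesis unfolding Fform[OF x] Fform[OF pi_simp] KL_self
      by (intro mult_left_mono) (use eta_pos in auto)
  qed
  have L1: "(\<Sum>a\<in>UNIV. \<bar>\<pi> (Suc (Suc n)) a - \<pi> (Suc n) a\<bar>) \<le> \<eta> / real (Suc n)" for n
  proof -
    define t where "t = Suc n"
    have t0: "real t > 0" by (simp add: t_def)
    define h where "h a = \<eta> * (Av t a - Av n a)" for a
    have x: "\<pi> t a * exp (h a) = (1 / Z n) * G t a" for a
    proof -
      have "exp (\<eta> * Av n a) * exp (h a) = exp (\<eta> * Av t a)"
        by (simp add: h_def exp_add[symmetric] algebra_simps)
      thus ?thesis by (simp add: t_def closed G_def)
    qed
    have eq: "\<pi> (Suc t) a = \<pi> t a * exp (h a) / (\<Sum>b\<in>UNIV. \<pi> t b * exp (h b))" for a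
    proof -
      have "\<pi> t a * exp (h a) / (\<Sum>b\<in>UNIV. \<pi> t b * exp (h b)) = G t a / (\<Sum>b\<in>UNIV. G t b)"
        by (rule normalize_scale[where C="1 / Z n"]) (use x Zpos[of n] in auto)
      thus ?thesis by (simp add: closed Z_def)
    qed
    have hb: "\<forall>a. - \<eta> / real t \<le> h a \<and> h a \<le> - \<eta> / real t + 2 * \<eta> / real t"
    proof
      fix a
      have q: "0 \<le> Q t a" "Q t a \<le> 1" using Q_range by (auto simp: t_def)
      have av: "0 \<le> Av n a" "Av n a \<le> 1" using Av_range by auto
      have hh: "h a = \<eta> * ((Q t a - Av n a) / real t)" unfolding h_def using Av_step[of n a] by (simp add: t_def)
      have "-1 / real t \<le> (Q t a - Av n a) / real t" by (rule divide_right_mono) (use q av t0 in auto)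
      hence lo: "\<eta> * (-1 / real t) \<le> h a" unfolding hh by (rule mult_left_mono) (use eta_pos in auto)
      have "(Q t a - Av n a) / real t \<le> 1 / real t" by (rule divide_right_mono) (use q av t0 in auto)
      hence hi: "h a \<le> \<eta> * (1 / real t)" unfolding hh by (rule mult_left_mono) (use eta_pos in auto)
      show "- \<eta> / real t \<le> h a \<and> h a \<le> - \<eta> / real t + 2 * \<eta> / real t"
        using lo hi by (simp add: field_simps)
    qed
    have "(\<Sum>a\<in>UNIV. \<bar>\<pi> (Suc t) a - \<pi> t a\<bar>) \<le> (2 * \<eta> / real t) / 2"
      unfolding eq by (rule l1_bound[OF _ hb]) (use pi_simp eta_pos t0 in \<open>auto simp: t_def\<close>)
    moreover have "(2 * \<eta> / real t) / 2 = \<eta> / real t" by simp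
    ultimately have "(\<Sum>a\<in>UNIV. \<bar>\<pi> (Suc t) a - \<pi> t a\<bar>) \<le> \<eta> / real t" by simp
    thus ?thesis by (simp add: t_def)
  qed
  have fdiff: "fobj \<eta> \<pi>ref Q (Suc n) (\<pi> (Suc (Suc n))) - fobj \<eta> \<pi>ref Q (Suc n) (\<pi> (Suc n)) \<le> \<eta> / real (Suc n)" for n
  proof -
    define t where "t = Suc n"
    define p1 where "p1 = \<pi> (Suc t)"
    define p0 where "p0 = \<pi> t"
    have p1s: "p1 \<in> simplex" and p0s: "p0 \<in> simplex" using pi_simp by (auto simp: p1_def p0_def t_def)
    have dc1: "KL p1 \<pi>ref = KL p1 p0 + (\<Sum>a\<in>UNIV. p1 a * (\<eta> * Av n a)) - ln (Z n)"
      using decomp[OF p1s ref_pos, of "\<lambda>a. \<eta> * Av n a"] unfolding p0_def t_def pi_fun Z_def G_def .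
    have dc0: "KL p0 \<pi>ref = KL p0 p0 + (\<Sum>a\<in>UNIV. p0 a * (\<eta> * Av n a)) - ln (Z n)"
      using decomp[OF p0s ref_pos, of "\<lambda>a. \<eta> * Av n a"] unfolding p0_def t_def pi_fun Z_def G_def .
    have g: "0 \<le> KL p1 p0" by (rule gibbs[OF p1s]) (use pi_pos pi_sum in \<open>auto simp: p0_def t_def\<close>)
    have e1: "(\<Sum>a\<in>UNIV. p1 a * (\<eta> * Av n a)) = \<eta> * (\<Sum>a\<in>UNIV. p1 a * Av n a)"
      by (simp add: sum_distrib_left algebra_simps)
    have e0: "(\<Sum>a\<in>UNIV. p0 a * (\<eta> * Av n a)) = \<eta> * (\<Sum>a\<in>UNIV. p0 a * Av n a)"
      by (simp add: sum_distrib_left algebra_simps)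
    define d where "d a = p1 a - p0 a" for a
    have dsum: "(\<Sum>a\<in>UNIV. d a) = 0" using p1s p0s by (simp add: d_def sum_subtractf simplex_def)
    have ds: "(\<Sum>a\<in>UNIV. d a * (Q t a - Av n a)) = (\<Sum>a\<in>UNIV. p1 a * Q t a) - (\<Sum>a\<in>UNIV. p0 a * Q t a) - (\<Sum>a\<in>UNIV. p1 a * Av n a) + (\<Sum>a\<in>UNIV. p0 a * Av n a)"
      by (simp add: d_def algebra_simps sum_subtractf sum.distrib)
    have "fobj \<eta> \<pi>ref Q t p1 - fobj \<eta> \<pi>ref Q t p0 = (\<Sum>a\<in>UNIV. d a * (Q t a - Av n a)) - KL p1 p0 / \<eta>"
      unfolding fobj_def ds dc1 dc0 e1 e0 KL_self using eta_pos by (simp add: field_simps)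
    also have "\<dots> \<le> (\<Sum>a\<in>UNIV. d a * (Q t a - Av n a))" using g eta_pos by simp
    also have "\<dots> \<le> 2 / 2 * (\<Sum>a\<in>UNIV. \<bar>d a\<bar>)"
    proof (rule inner_bound[OF dsum])
      show "\<forall>a. - 1 \<le> Q t a - Av n a \<and> Q t a - Av n a \<le> - 1 + 2"
      proof
        fix a
        have "0 \<le> Q t a" "Q t a \<le> 1" using Q_range by (auto simp: t_def)
        moreover have "0 \<le> Av n a" "Av n a \<le> 1" using Av_range by auto
        ultimately show "- 1 \<le> Q t a - Av n a \<and> Q t a - Av n a \<le> - 1 + 2" by linarith
      qed
    qed
    also have "\<dots> \<le> \<eta> / real t" using L1[of n] by (simp add: d_def p1_def p0_def t_def)
    finally show ?thesis by (simp add: p1_def p0_def t_def)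
  qed
  have bnd: "\<eta> / real (Suc n) \<le> 2 * \<eta> / (2 * real (Suc n) - 1)" for n
  proof -
    have "\<eta> / real (Suc n) = 2 * \<eta> / (2 * real (Suc n))" by (simp only: mult_divide_mult_cancel_left_if) simp
    also have "\<dots> \<le> 2 * \<eta> / (2 * real (Suc n) - 1)"
      by (rule divide_left_mono) (use eta_pos in auto)
    finally show ?thesis .
  qed
  have part1: "\<forall>t\<ge>1.
            (\<exists>c>0. \<forall>a. \<pi> (t + 1) a = c * \<pi>ref a * exp (\<eta> / real t * (\<Sum>k=1..t. Q k a)))
          \<and> is_arg_max (\<lambda>p. \<Sum>k=1..t. fobj \<eta> \<pi>ref Q k p) (\<lambda>p. p \<in> simplex) (\<pi> (t + 1))
          \<and> (\<Sum>a\<in>UNIV. \<bar>\<pi> (t + 1) a - \<pi> t a\<bar>) \<le> 2 * \<eta> / (2 * real t - 1)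
          \<and> fobj \<eta> \<pi>ref Q t (\<pi> (t + 1)) - fobj \<eta> \<pi>ref Q t (\<pi> t) \<le> 2 * \<eta> / (2 * real t - 1)"
  proof (intro allI impI)
    fix t :: nat assume "1 \<le> t"
    then obtain n where tn: "t = Suc n" by (cases t) auto
    have c1: "\<exists>c>0. \<forall>a. \<pi> (t + 1) a = c * \<pi>ref a * exp (\<eta> / real t * (\<Sum>k=1..t. Q k a))"
      by (rule exI[where x="1 / Z t"]) (use Zpos in \<open>auto simp: tn closed G_def Av_def S_def\<close>)
    have c2: "is_arg_max (\<lambda>p. \<Sum>k=1..t. fobj \<eta> \<pi>ref Q k p) (\<lambda>p. p \<in> simplex) (\<pi> (t + 1))"
      unfolding is_arg_max_def using pi_simp argmax_le by (auto simp: tn not_less)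
    show "(\<exists>c>0. \<forall>a. \<pi> (t + 1) a = c * \<pi>ref a * exp (\<eta> / real t * (\<Sum>k=1..t. Q k a)))
          \<and> is_arg_max (\<lambda>p. \<Sum>k=1..t. fobj \<eta> \<pi>ref Q k p) (\<lambda>p. p \<in> simplex) (\<pi> (t + 1))
          \<and> (\<Sum>a\<in>UNIV. \<bar>\<pi> (t + 1) a - \<pi> t a\<bar>) \<le> 2 * \<eta> / (2 * real t - 1)
          \<and> fobj \<eta> \<pi>ref Q t (\<pi> (t + 1)) - fobj \<eta> \<pi>ref Q t (\<pi> t) \<le> 2 * \<eta> / (2 * real t - 1)"
      using c1 c2 order_trans[OF L1[of n] bnd[of n]] order_trans[OF fdiff[of n] bnd[of n]]
      by (simp add: tn)
  qed
  have btl: "\<forall>x\<in>(simplex :: ('a \<Rightarrow> real) set). (\<Sum>t=1..T. fobj \<eta> \<pi>ref Q t x) \<le> (\<Sum>t=1..T. fobj \<eta> \<pi>ref Q t (\<pi> (Suc t)))" for T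
  proof (induction T)
    case 0 show ?case by simp
  next
    case (Suc T)
    show ?case
    proof
      fix x :: "'a \<Rightarrow> real" assume x: "x \<in> simplex"
      have "(\<Sum>t=1..Suc T. fobj \<eta> \<pi>ref Q t x) \<le> (\<Sum>t=1..Suc T. fobj \<eta> \<pi>ref Q t (\<pi> (Suc (Suc T))))"
        by (rule argmax_le[OF x])
      also have "\<dots> = (\<Sum>t=1..T. fobj \<eta> \<pi>ref Q t (\<pi> (Suc (Suc T)))) + fobj \<eta> \<pi>ref Q (Suc T) (\<pi> (Suc (Suc T)))"
        by simp
      also have "\<dots> \<le> (\<Sum>t=1..T. fobj \<eta> \<pi>ref Q t (\<pi> (Suc t))) + fobj \<eta> \<pi>ref Q (Suc T) (\<pi> (Suc (Suc T)))"
        using Suc.IH pi_simp by auto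
      also have "\<dots> = (\<Sum>t=1..Suc T. fobj \<eta> \<pi>ref Q t (\<pi> (Suc t)))" by simp
      finally show "(\<Sum>t=1..Suc T. fobj \<eta> \<pi>ref Q t x) \<le> (\<Sum>t=1..Suc T. fobj \<eta> \<pi>ref Q t (\<pi> (Suc t)))" .
    qed
  qed
  have part2: "\<forall>T\<ge>1. \<forall>p\<in>simplex.
            (\<Sum>t=1..T. fobj \<eta> \<pi>ref Q t p - fobj \<eta> \<pi>ref Q t (\<pi> t)) \<le> 2 * \<eta> * (1 + ln (real T))"
  proof (intro allI impI ballI)
    fix T :: nat and p :: "'a \<Rightarrow> real" assume T: "1 \<le> T" and p: "p \<in> simplex"
    have "(\<Sum>t=1..T. fobj \<eta> \<pi>ref Q t p - fobj \<eta> \<pi>ref Q t (\<pi> t))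
        = ((\<Sum>t=1..T. fobj \<eta> \<pi>ref Q t p) - (\<Sum>t=1..T. fobj \<eta> \<pi>ref Q t (\<pi> (Suc t))))
          + (\<Sum>t=1..T. fobj \<eta> \<pi>ref Q t (\<pi> (Suc t)) - fobj \<eta> \<pi>ref Q t (\<pi> t))"
      by (simp add: sum_subtractf)
    also have "\<dots> \<le> 0 + (\<Sum>t=1..T. 2 * \<eta> * (1 / (2 * real t - 1)))"
    proof (rule add_mono)
      show "(\<Sum>t=1..T. fobj \<eta> \<pi>ref Q t p) - (\<Sum>t=1..T. fobj \<eta> \<pi>ref Q t (\<pi> (Suc t))) \<le> 0"
        using btl[of T] p by auto
      show "(\<Sum>t=1..T. fobj \<eta> \<pi>ref Q t (\<pi> (Suc t)) - fobj \<eta> \<pi>ref Q t (\<pi> t)) \<le> (\<Sum>t=1..T. 2 * \<eta> * (1 / (2 * real t - 1)))"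
      proof (rule sum_mono)
        fix t assume "t \<in> {1..T}"
        then obtain n where tn: "t = Suc n" by (cases t) auto
        show "fobj \<eta> \<pi>ref Q t (\<pi> (Suc t)) - fobj \<eta> \<pi>ref Q t (\<pi> t) \<le> 2 * \<eta> * (1 / (2 * real t - 1))"
          using order_trans[OF fdiff[of n] bnd[of n]] by (simp add: tn)
      qed
    qed
    also have "\<dots> = 2 * \<eta> * (\<Sum>t=1..T. 1 / (2 * real t - 1))" by (simp add: sum_distrib_left)
    also have "\<dots> \<le> 2 * \<eta> * (1 + ln (real T))"
      by (rule mult_left_mono[OF harm_bound[OF T]]) (use eta_pos in simp)
    finally show "(\<Sum>t=1..T. fobj \<eta> \<pi>ref Q t p - fobj \<eta> \<pi>ref Q t (\<pi> t)) \<le> 2 * \<eta> * (1 + ln (real T))" .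
  qed
  show ?thesis using part1 part2 by blast
qed

end
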